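(* Let $\mathsf{X}$ be a real Hilbert space with norm $\|\cdot\|$, let $\mathcal{H}\subset\mathsf{X}$ be a closed linear subspace, and let $\mathcal{M}\subset\mathsf{X}$ be a closed subset that is closed with respect to scalar multiplication ($z\in\mathcal{M}\Rightarrow \alpha z\in\mathcal{M}$ for all real $\alpha$). Assume every point of $\mathsf{X}$ has at least one closest point in $\mathcal{M}$, and let $\Pi_{\mathcal{M}}$ be a map assigning to each point one such closest point; let $\Pi_{\mathcal{H}}$ be the orthogonal projection onto $\mathcal{H}$. For $x\in\mathsf{X}$ define $y_0=x$ and $y_{k+1}=\Pi_{\mathcal{H}}\Pi_{\mathcal{M}}y_k$ for $k\ge 0$. Then: 1. $\|y_k-\Pi_{\mathcal{M}}y_k\|\to0$ and $\|\Pi_{\mathcal{M}}y_k-y_{k+1}\|\to 0$ as $k\to\infty$. 2. If moreover $\mathcal{M}\cap B_1$ is compact, where $B_1=\{z\in\mathsf{X}:\|z\|\le1\}$, then there is a subsequence $(y_{i_k})$ of $(y_k)$ converging to a point $y^*\in\mathcal{M}\cap\mathcal{H}$. *)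

theory Defs
  imports "HOL-Analysis.Analysis"
begin

definition orth_proj :: "'a::real_inner set \<Rightarrow> 'a \<Rightarrow> 'a" where
  "orth_proj H x = (THE p. p \<in> H \<and> (\<forall>h\<in>H. inner (x - p) h = 0))"

end

theory Submission
  imports Defs
begin



lemma min_orth:
  fixes v g :: "'a::real_inner"
  assumes "\<And>s::real. norm v \<le> norm (v - s *\<^sub>R g)"
  shows "inner v g = 0"
proof (cases "g = 0")
  case True then show ?thesis by simp
next
  case False
  define c where "c = inner v g"
  define s where "s = c / (norm g)^2"
  have ng: "(norm g)^2 > 0" using False by simp
  have "(norm (v - s *\<^sub>R g))^2 = (norm v)^2 - 2 * s * c + s^2 * (norm g)^2"
    unfolding power2_norm_eq_inner
    by (simp add: inner_diff_left inner_diff_right c_def inner_commute power2_eq_square)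
  also have "\<dots> = (norm v)^2 - c^2 / (norm g)^2"
    using ng by (simp add: s_def field_simps power2_eq_square)
  finally have eq: "(norm (v - s *\<^sub>R g))^2 = (norm v)^2 - c^2 / (norm g)^2" .
  have "(norm v)^2 \<le> (norm (v - s *\<^sub>R g))^2"
    using assms[of s] by (simp add: power_mono)
  with eq have "c^2 / (norm g)^2 \<le> 0" by simp
  with ng have "c^2 \<le> 0" by (simp add: divide_le_0_iff)
  then show ?thesis unfolding c_def[symmetric] by (metis le_less_trans not_less power2_less_0 zero_less_power2 order_antisym_conv zero_le_power2 zero_eq_power2)
qed

lemma parallelogram:
  fixes a b :: "'a::real_inner"
  shows "(norm (a + b))^2 + (norm (a - b))^2 = 2 * (norm a)^2 + 2 * (norm b)^2"
  by (simp add: power2_norm_eq_inner inner_add_left inner_add_right inner_diff_left inner_diff_right inner_commute)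

lemma proj_exists:
  fixes H :: "'a::{real_inner, complete_space} set"
  assumes sH: "subspace H" and cH: "closed H"
  shows "\<exists>h\<in>H. \<forall>g\<in>H. norm (p - h) \<le> norm (p - g)"
proof -
  define D where "D = (\<lambda>h. norm (p - h)) ` H"
  define \<delta> where "\<delta> = Inf D"
  have D_ne: "D \<noteq> {}" using subspace_0[OF sH] by (auto simp: D_def)
  have D_bdd: "bdd_below D" unfolding D_def by (rule bdd_belowI[of _ 0]) auto
  have dle: "\<delta> \<le> norm (p - g)" if "g \<in> H" for g
    unfolding \<delta>_def using D_bdd that by (auto simp: D_def intro!: cInf_lower)
  have d0: "0 \<le> \<delta>" unfolding \<delta>_def using D_ne by (intro cInf_greatest) (auto simp: D_def)
  have "\<exists>h\<in>H. norm (p - h) < \<delta> + 1 / (real n + 1)" for n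
  proof -
    have "Inf D < \<delta> + 1 / (real n + 1)" unfolding \<delta>_def by simp
    then obtain d where "d \<in> D" "d < \<delta> + 1 / (real n + 1)" using cInf_lessD[OF D_ne] by blast
    then show ?thesis by (auto simp: D_def)
  qed
  then obtain hs where hsH: "\<And>n. hs n \<in> H" and hsd: "\<And>n. norm (p - hs n) < \<delta> + 1 / (real n + 1)"
    by metis
  have key: "(norm (hs n - hs m))^2 \<le> 4 * (\<delta> + 1) * (1 / (real n + 1) + 1 / (real m + 1))" for n m
  proof -
    define en where "en = 1 / (real n + 1)"
    define em where "em = 1 / (real m + 1)"
    have en: "0 \<le> en" "en \<le> 1" unfolding en_def by (auto simp: field_simps)
    have em: "0 \<le> em" "em \<le> 1" unfolding em_def by (auto simp: field_simps)
    have mid: "(1/2::real) *\<^sub>R (hs n + hs m) \<in> H"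
      using hsH sH by (simp add: subspace_add subspace_scale)
    have md: "\<delta> \<le> norm (p - (1/2::real) *\<^sub>R (hs n + hs m))" using dle[OF mid] .
    have "(p - hs n) + (p - hs m) = 2 *\<^sub>R (p - (1/2::real) *\<^sub>R (hs n + hs m))"
      by (simp add: algebra_simps scaleR_2)
    then have n2: "norm ((p - hs n) + (p - hs m)) = 2 * norm (p - (1/2::real) *\<^sub>R (hs n + hs m))"
      by simp
    have "(p - hs n) - (p - hs m) = hs m - hs n" by simp
    then have n3: "norm ((p - hs n) - (p - hs m)) = norm (hs n - hs m)" by (simp add: norm_minus_commute)
    have a1: "(norm (p - hs n))^2 \<le> (\<delta> + en)^2"
      using hsd[of n] en_def by (simp add: power_mono)
    have a2: "(norm (p - hs m))^2 \<le> (\<delta> + em)^2"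
      using hsd[of m] em_def by (simp add: power_mono)
    have a3: "\<delta>^2 \<le> (norm (p - (1/2::real) *\<^sub>R (hs n + hs m)))^2"
      using md d0 by (simp add: power_mono)
    have "(norm (hs n - hs m))^2 \<le> 2 * (\<delta> + en)^2 + 2 * (\<delta> + em)^2 - 4 * \<delta>^2"
      using parallelogram[of "p - hs n" "p - hs m"] n2 n3 a1 a2 a3
      by (simp add: power_mult_distrib)
    also have "\<dots> = 4 * \<delta> * (en + em) + 2 * en * en + 2 * em * em"
      by (simp add: power2_eq_square algebra_simps)
    also have "\<dots> \<le> 4 * (\<delta> + 1) * (en + em)"
      using en em d0 by (simp add: algebra_simps) (smt (verit) mult_left_le_one_le mult_nonneg_nonneg)
    finally show ?thesis unfolding en_def em_def .
  qed
  have "Cauchy hs"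
  proof (rule metric_CauchyI)
    fix e :: real assume e: "0 < e"
    define c where "c = 8 * (\<delta> + 1)"
    have c: "0 < c" using d0 by (simp add: c_def)
    obtain N where N: "inverse (real (Suc N)) < e^2 / c"
      using reals_Archimedean[of "e^2 / c"] e c by auto
    show "\<exists>M. \<forall>m\<ge>M. \<forall>n\<ge>M. dist (hs m) (hs n) < e"
    proof (intro exI allI impI)
      fix m n assume mN: "N \<le> m" and nN: "N \<le> n"
      have i1: "1 / (real m + 1) \<le> inverse (real (Suc N))" using mN by (simp add: field_simps)
      have i2: "1 / (real n + 1) \<le> inverse (real (Suc N))" using nN by (simp add: field_simps)
      have "(dist (hs m) (hs n))^2 \<le> 4 * (\<delta> + 1) * (1 / (real m + 1) + 1 / (real n + 1))"
        using key[of m n] by (simp add: dist_norm)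
      also have "\<dots> \<le> 4 * (\<delta> + 1) * (2 * inverse (real (Suc N)))"
        using i1 i2 d0 by (intro mult_left_mono) auto
      also have "\<dots> = c * inverse (real (Suc N))" by (simp add: c_def)
      also have "\<dots> < c * (e^2 / c)" using N c by (intro mult_strict_left_mono) auto
      also have "\<dots> = e^2" using c by simp
      finally have "(dist (hs m) (hs n))^2 < e^2" .
      then show "dist (hs m) (hs n) < e" using e by (simp add: power_less_imp_less_base)
    qed
  qed
  then obtain h where hl: "hs \<longlonglongrightarrow> h" using Cauchy_convergent convergent_def by blast
  have hH: "h \<in> H" using cH hsH hl closed_sequentially by blast
  have "(\<lambda>n. norm (p - hs n)) \<longlonglongrightarrow> norm (p - h)"
    by (intro tendsto_intros hl)
  moreover have "(\<lambda>n. \<delta> + 1 / (real n + 1)) \<longlonglongrightarrow> \<delta> + 0"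
  proof (intro tendsto_intros)
    show "(\<lambda>n. 1 / (real n + 1)) \<longlonglongrightarrow> 0"
      using LIMSEQ_inverse_real_of_nat by (simp add: inverse_eq_divide add.commute)
  qed
  ultimately have "norm (p - h) \<le> \<delta>"
    using hsd by (intro LIMSEQ_le[where X="\<lambda>n. norm (p - hs n)"]) (auto intro: less_imp_le)
  then show ?thesis using hH dle by (meson order_trans)
qed


lemma orth_proj:
  fixes H :: "'a::{real_inner, complete_space} set"
  assumes sH: "subspace H" and cH: "closed H"
  shows "orth_proj H p \<in> H \<and> (\<forall>h\<in>H. inner (p - orth_proj H p) h = 0)"
proof -
  obtain q where qH: "q \<in> H" and qm: "\<forall>g\<in>H. norm (p - q) \<le> norm (p - g)"
    using proj_exists[OF sH cH] by blast
  have qo: "\<forall>h\<in>H. inner (p - q) h = 0"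
  proof
    fix h assume hH: "h \<in> H"
    show "inner (p - q) h = 0"
    proof (rule min_orth)
      fix t :: real
      have "q + t *\<^sub>R h \<in> H" using sH qH hH by (simp add: subspace_add subspace_scale)
      then have "norm (p - q) \<le> norm (p - (q + t *\<^sub>R h))" using qm by blast
      then show "norm (p - q) \<le> norm (p - q - t *\<^sub>R h)" by (simp add: algebra_simps)
    qed
  qed
  have uniq: "r = q" if "r \<in> H" "\<forall>h\<in>H. inner (p - r) h = 0" for r
  proof -
    have d: "r - q \<in> H" using sH that(1) qH by (simp add: subspace_diff)
    have "inner (p - r) (r - q) = 0" "inner (p - q) (r - q) = 0" using that(2) qo d by auto
    then have "inner (r - q) (r - q) = 0" by (simp add: inner_diff_left)
    then show ?thesis by simp
  qed
  have "\<exists>!r. r \<in> H \<and> (\<forall>h\<in>H. inner (p - r) h = 0)"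
    using qH qo uniq by blast
  then show ?thesis unfolding orth_proj_def by (rule theI')
qed

lemma pyth2:
  fixes w v :: "'a::real_inner"
  assumes "inner (w - v) v = 0"
  shows "(norm w)^2 = (norm v)^2 + (norm (w - v))^2"
  using assms unfolding power2_norm_eq_inner
  by (simp add: inner_diff_left inner_diff_right inner_commute)

theorem theorem1:
  fixes H M :: "'a::{real_inner, complete_space} set"
    and PM :: "'a \<Rightarrow> 'a"
    and x :: 'a
    and y :: "nat \<Rightarrow> 'a"
  assumes H_subspace: "subspace H" and H_closed: "closed H"
    and M_closed: "closed M"
    and M_scale: "\<And>z \<alpha>. z \<in> M \<Longrightarrow> (\<alpha>::real) *\<^sub>R z \<in> M"
    and M_proj_exists: "\<forall>u. \<exists>m\<in>M. \<forall>z\<in>M. dist u m \<le> dist u z"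
    and PM: "\<And>u. PM u \<in> M \<and> (\<forall>z\<in>M. dist u (PM u) \<le> dist u z)"
    and y0: "y 0 = x"
    and ySuc: "\<And>k. y (Suc k) = orth_proj H (PM (y k))"
  shows "((\<lambda>k. norm (y k - PM (y k))) \<longlonglongrightarrow> 0)
       \<and> ((\<lambda>k. norm (PM (y k) - y (Suc k))) \<longlonglongrightarrow> 0)
       \<and> (compact (M \<inter> cball 0 1) \<longrightarrow>
            (\<exists>r ys. strict_mono r \<and> ys \<in> M \<inter> H \<and> (y \<circ> r) \<longlonglongrightarrow> ys))"
proof -
  have 0: "0 \<in> H" using subspace_0[OF H_subspace] .
  have yH: "y (Suc k) \<in> H" for k using orth_proj[OF H_subspace H_closed] ySuc by simp
  have yorth: "inner (PM (y k) - y (Suc k)) h = 0" if "h \<in> H" for k h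
    using orth_proj[OF H_subspace H_closed, of "PM (y k)"] ySuc that by simp
  have cone: "inner (u - PM u) (PM u) = 0" for u
  proof (rule min_orth)
    fix s :: real
    have "(1 + s) *\<^sub>R PM u \<in> M" using PM M_scale by blast
    then have "dist u (PM u) \<le> dist u ((1 + s) *\<^sub>R PM u)" using PM by blast
    moreover have "u - (1 + s) *\<^sub>R PM u = (u - PM u) - s *\<^sub>R PM u" by (simp add: algebra_simps)
    ultimately show "norm (u - PM u) \<le> norm (u - PM u - s *\<^sub>R PM u)" by (simp add: dist_norm)
  qed
  define a where "a k = norm (y k - PM (y k))" for k
  define b where "b k = norm (PM (y k) - y (Suc k))" for k
  have energy: "(norm (y (Suc k)))^2 + (a k)^2 + (b k)^2 = (norm (y k))^2" for k
  proof -
    have e1: "(norm (y k))^2 = (norm (PM (y k)))^2 + (a k)^2"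
      using pyth2[OF cone[of "y k"]] by (simp add: a_def)
    have e2: "(norm (PM (y k)))^2 = (norm (y (Suc k)))^2 + (b k)^2"
      using pyth2[OF yorth[OF yH, of k k]] by (simp add: b_def)
    show ?thesis using e1 e2 by simp
  qed
  define f where "f k = (a k)^2 + (b k)^2" for k
  have tele: "(\<Sum>k<n. f k) + (norm (y n))^2 = (norm x)^2" for n
  proof (induction n)
    case 0 then show ?case using y0 by simp
  next
    case (Suc n) then show ?case using energy[of n] by (simp add: f_def)
  qed
  have "summable f"
  proof (rule summableI_nonneg_bounded)
    show "0 \<le> f n" for n by (simp add: f_def)
    show "sum f {..<n} \<le> (norm x)^2" for n using tele[of n] by (smt (verit) zero_le_power2)
  qed
  then have f0: "f \<longlonglongrightarrow> 0" by (rule summable_LIMSEQ_zero)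
  then have sf0: "(\<lambda>k. sqrt (f k)) \<longlonglongrightarrow> 0" using tendsto_real_sqrt by fastforce
  have a0: "a \<longlonglongrightarrow> 0"
  proof (rule tendsto_sandwich[of "\<lambda>_. 0" _ _ "\<lambda>k. sqrt (f k)"])
    show "\<forall>\<^sub>F n in sequentially. 0 \<le> a n" by (simp add: a_def)
    show "\<forall>\<^sub>F n in sequentially. a n \<le> sqrt (f n)"
      by (intro always_eventually allI) (simp add: f_def a_def real_le_rsqrt)
  qed (use sf0 in auto)
  have b0: "b \<longlonglongrightarrow> 0"
  proof (rule tendsto_sandwich[of "\<lambda>_. 0" _ _ "\<lambda>k. sqrt (f k)"])
    show "\<forall>\<^sub>F n in sequentially. 0 \<le> b n" by (simp add: b_def)
    show "\<forall>\<^sub>F n in sequentially. b n \<le> sqrt (f n)"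
      by (intro always_eventually allI) (simp add: f_def b_def real_le_rsqrt)
  qed (use sf0 in auto)
  have part3: "\<exists>r ys. strict_mono r \<and> ys \<in> M \<inter> H \<and> (y \<circ> r) \<longlonglongrightarrow> ys"
    if cpt: "compact (M \<inter> cball 0 1)"
  proof -
    define R where "R = norm x + 1"
    have R: "0 < R" by (simp add: R_def add_nonneg_pos)
    have ny: "norm (y k) \<le> norm x" for k
    proof -
      have "0 \<le> sum f {..<k}" by (intro sum_nonneg) (simp add: f_def)
      then have "(norm (y k))^2 \<le> (norm x)^2" using tele[of k] by linarith
      then show ?thesis by (simp add: power2_le_iff_abs_le)
    qed
    have npm: "norm (PM (y k)) \<le> norm x" for k
    proof -
      have "(norm (PM (y k)))^2 \<le> (norm (y k))^2"
        using pyth2[OF cone[of "y k"]] by simp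
      then have "norm (PM (y k)) \<le> norm (y k)" by (simp add: power2_le_iff_abs_le)
      then show ?thesis using ny[of k] by simp
    qed
    define z where "z k = inverse R *\<^sub>R PM (y k)" for k
    have zin: "z k \<in> M \<inter> cball 0 1" for k
    proof -
      have "z k \<in> M" unfolding z_def using PM M_scale by blast
      moreover have "norm (z k) \<le> 1"
        using npm[of k] R by (simp add: z_def R_def field_simps)
      ultimately show ?thesis by simp
    qed
    obtain l s where lin: "l \<in> M \<inter> cball 0 1" and s: "strict_mono s" and zl: "(z \<circ> s) \<longlonglongrightarrow> l"
      using cpt zin unfolding compact_def by metis
    define ys where "ys = R *\<^sub>R l"
    have ysM: "ys \<in> M" using lin M_scale by (simp add: ys_def)
    have pml: "(\<lambda>k. PM (y (s k))) \<longlonglongrightarrow> ys"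
    proof -
      have "(\<lambda>k. R *\<^sub>R z (s k)) \<longlonglongrightarrow> R *\<^sub>R l"
        using zl by (intro tendsto_intros) (simp add: comp_def)
      moreover have "R *\<^sub>R z (s k) = PM (y (s k))" for k using R by (simp add: z_def)
      ultimately show ?thesis by (simp add: ys_def)
    qed
    have "(\<lambda>k. b (s k)) \<longlonglongrightarrow> 0" using LIMSEQ_subseq_LIMSEQ[OF b0 s] by (simp add: comp_def)
    then have "(\<lambda>k. PM (y (s k)) - y (Suc (s k))) \<longlonglongrightarrow> 0"
      unfolding b_def using tendsto_norm_zero_iff by blast
    then have "(\<lambda>k. PM (y (s k)) - (PM (y (s k)) - y (Suc (s k)))) \<longlonglongrightarrow> ys - 0"
      using pml by (intro tendsto_intros)
    then have yl: "(y \<circ> (Suc \<circ> s)) \<longlonglongrightarrow> ys" by (simp add: comp_def)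
    have "ys \<in> H"
      using H_closed yl yH closed_sequentially[of H "y \<circ> (Suc \<circ> s)" ys] by simp
    moreover have "strict_mono (Suc \<circ> s)" using s by (simp add: strict_mono_def)
    ultimately show ?thesis using ysM yl by blast
  qed
  show ?thesis using a0 b0 part3 unfolding a_def[abs_def] b_def[abs_def] by blast
qed

end
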